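(* Consider the multivariate LISO loss $L_\lambda$ (defined in the context) for fixed $\lambda\ge 0$, and the randomized LISO-backfitting procedure: start from any feasible $f^0=(\theta^0_1,\dots,\theta^0_p)$; at cycle $m=1,2,\dots$, draw a permutation $\sigma_m$ of $\{1,\dots,p\}$ uniformly at random, independently of everything else, and for $j=1,\dots,p$ in turn, with $k=\sigma_m(j)$, replace the current $\theta_k$ by the minimiser of $L_\lambda$ over $\theta_k\in\mathcal{F}_k$ with all other components held at their current values; let $f^m$ be the state at the end of cycle $m$. Then with probability 1, $L_\lambda(f^m)$ converges (monotonically) to $\min L_\lambda$. Moreover, if $L_\lambda$ has a unique minimiser, then $f^m$ converges to it with probability 1.
   Context: Data: $Y\in\mathbb{R}^n$ with $\sum_iY_i=0$, and covariate matrix $X\in\mathbb{R}^{n\times p}$ with columns $X^{(1)},\dots,X^{(p)}$. For each $k$, $\mathcal{F}_k$ is the set of vectors $\theta_k\in\mathbb{R}^n$ with $\sum_i\theta_{k,i}=0$ that are monotone in $X^{(k)}$: $\theta_{k,i}\le\theta_{k,j}$ whenever $X^{(k)}_i<X^{(k)}_j$ and $\theta_{k,i}=\theta_{k,j}$ whenever $X^{(k)}_i=X^{(k)}_j$ (these are the fitted values $f_k(X^{(k)}_i)$ of mean-zero nondecreasing functions $f_k$). The LISO loss is $$L_\lambda(\theta_1,\dots,\theta_p)=\tfrac12\Big\|Y-\sum_{k=1}^p\theta_k\Big\|^2+\lambda\sum_{k=1}^p\big(\max_i\theta_{k,i}-\min_i\theta_{k,i}\big)$$ over $(\theta_1,\dots,\theta_p)\in\mathcal{F}_1\times\dots\times\mathcal{F}_p$.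 (Each single-block minimisation has a unique solution, given by a thresholded isotonic regression of the partial residual.) *)

theory Defs
  imports "HOL-Probability.Probability" "HOL-Combinatorics.Multiset_Permutations"
begin

text \<open>Observations are indexed by the finite type 'n, covariates by the finite type 'p.
  X $ i $ k is the k-th covariate of observation i. A state is
  theta :: real^'n^'p, with theta $ k the fitted vector of the k-th component.\<close>

definition Fk :: "real^'p^'n \<Rightarrow> 'p \<Rightarrow> (real^'n) set" where
  "Fk X k = {t. (\<Sum>i\<in>UNIV. t $ i) = 0 \<and>
      (\<forall>i j. X $ i $ k < X $ j $ k \<longrightarrow> t $ i \<le> t $ j) \<and>
      (\<forall>i j. X $ i $ k = X $ j $ k \<longrightarrow> t $ i = t $ j)}"

definition feasible :: "real^'p^'n \<Rightarrow> (real^'n^'p) set" where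
  "feasible X = {f. \<forall>k. f $ k \<in> Fk X k}"

definition liso_loss :: "real^'n \<Rightarrow> real \<Rightarrow> real^'n^'p \<Rightarrow> real" where
  "liso_loss Y lam f =
     (1/2) * (norm (Y - (\<Sum>k\<in>UNIV. f $ k)))\<^sup>2
     + lam * (\<Sum>k\<in>UNIV. Max (range (\<lambda>i. f $ k $ i)) - Min (range (\<lambda>i. f $ k $ i)))"

definition upd_comp :: "real^'n^'p \<Rightarrow> 'p \<Rightarrow> real^'n \<Rightarrow> real^'n^'p" where
  "upd_comp f k t = (\<chi> j. if j = k then t else f $ j)"

definition block_min :: "real^'n \<Rightarrow> real^'p^'n \<Rightarrow> real \<Rightarrow> real^'n^'p \<Rightarrow> 'p \<Rightarrow> real^'n" where
  "block_min Y X lam f k = (THE t. t \<in> Fk X k \<and>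
      (\<forall>t'\<in>Fk X k. liso_loss Y lam (upd_comp f k t) \<le> liso_loss Y lam (upd_comp f k t')))"

definition block_step :: "real^'n \<Rightarrow> real^'p^'n \<Rightarrow> real \<Rightarrow> real^'n^'p \<Rightarrow> 'p \<Rightarrow> real^'n^'p" where
  "block_step Y X lam f k = upd_comp f k (block_min Y X lam f k)"

text \<open>One cycle: update blocks in the order given by the permutation (a list enumerating all of 'p).\<close>
definition cycle :: "real^'n \<Rightarrow> real^'p^'n \<Rightarrow> real \<Rightarrow> real^'n^'p \<Rightarrow> 'p list \<Rightarrow> real^'n^'p" where
  "cycle Y X lam f \<sigma> = foldl (block_step Y X lam) f \<sigma>"

text \<open>Trajectory: state after m cycles, where cycle m+1 uses the permutation \<omega> !! m.\<close>
primrec backfit :: "real^'n \<Rightarrow> real^'p^'n \<Rightarrow> real \<Rightarrow> real^'n^'p \<Rightarrow> 'p list stream \<Rightarrow> nat \<Rightarrow> real^'n^'p" where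
  "backfit Y X lam f0 \<omega> 0 = f0"
| "backfit Y X lam f0 \<omega> (Suc m) = cycle Y X lam (backfit Y X lam f0 \<omega> m) (\<omega> !! m)"

definition perm_law :: "('p::finite) list stream measure" where
  "perm_law = stream_space (measure_pmf (pmf_of_set (permutations_of_set (UNIV :: 'p set))))"

end

theory Submission
  imports Defs
begin


definition rng :: "real^'n \<Rightarrow> real" where
  "rng t = Max (range (\<lambda>i. t$i)) - Min (range (\<lambda>i. t$i))"

lemma Max_comp_ge: "t$i \<le> Max (range (\<lambda>i. t$i))"
  for t :: "real^'n" by (rule Max_ge) auto
lemma Min_comp_le: "Min (range (\<lambda>i. t$i)) \<le> t$i"
  for t :: "real^'n" by (rule Min_le) auto
lemma Max_comp_le: "(\<And>i. t$i \<le> c) \<Longrightarrow> Max (range (\<lambda>i. t$i)) \<le> c"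
  for t :: "real^'n" by (subst Max_le_iff) auto
lemma Min_comp_ge: "(\<And>i. c \<le> t$i) \<Longrightarrow> c \<le> Min (range (\<lambda>i. t$i))"
  for t :: "real^'n" by (subst Min_ge_iff) auto

lemma rng_convex:
  fixes t u :: "real^'n"
  assumes "0 \<le> e" "e \<le> 1"
  shows "rng ((1-e) *\<^sub>R t + e *\<^sub>R u) \<le> (1-e) * rng t + e * rng u"
proof -
  let ?w = "(1-e) *\<^sub>R t + e *\<^sub>R u"
  have "Max (range (\<lambda>i. ?w$i)) \<le> (1-e) * Max (range (\<lambda>i. t$i)) + e * Max (range (\<lambda>i. u$i))"
  proof (rule Max_comp_le)
    fix i
    have "(1-e) * t$i \<le> (1-e) * Max (range (\<lambda>i. t$i))"
      using Max_comp_ge[of t i] assms by (intro mult_left_mono) auto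
    moreover have "e * u$i \<le> e * Max (range (\<lambda>i. u$i))"
      using Max_comp_ge[of u i] assms by (intro mult_left_mono) auto
    ultimately show "?w$i \<le> (1-e) * Max (range (\<lambda>i. t$i)) + e * Max (range (\<lambda>i. u$i))"
      by simp
  qed
  moreover have "(1-e) * Min (range (\<lambda>i. t$i)) + e * Min (range (\<lambda>i. u$i)) \<le> Min (range (\<lambda>i. ?w$i))"
  proof (rule Min_comp_ge)
    fix i
    have "(1-e) * t$i \<ge> (1-e) * Min (range (\<lambda>i. t$i))"
      using Min_comp_le[of t i] assms by (intro mult_left_mono) auto
    moreover have "e * u$i \<ge> e * Min (range (\<lambda>i. u$i))"
      using Min_comp_le[of u i] assms by (intro mult_left_mono) auto
    ultimately show "(1-e) * Min (range (\<lambda>i. t$i)) + e * Min (range (\<lambda>i. u$i)) \<le> ?w$i"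
      by simp
  qed
  ultimately show ?thesis unfolding rng_def by (simp add: algebra_simps)
qed

lemma Max_comp_lip:
  fixes t u :: "real^'n"
  shows "Max (range (\<lambda>i. t$i)) \<le> Max (range (\<lambda>i. u$i)) + norm (t - u)"
proof (rule Max_comp_le)
  fix i
  have "t$i - u$i \<le> norm (t - u)"
    using component_le_norm_cart[of "t - u" i] by simp
  then show "t$i \<le> Max (range (\<lambda>i. u$i)) + norm (t - u)"
    using Max_comp_ge[of u i] by linarith
qed

lemma Min_comp_lip:
  fixes t u :: "real^'n"
  shows "Min (range (\<lambda>i. u$i)) \<le> Min (range (\<lambda>i. t$i)) + norm (t - u)"
proof -
  have "Min (range (\<lambda>i. u$i)) - norm (t - u) \<le> Min (range (\<lambda>i. t$i))"
  proof (rule Min_comp_ge)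
    fix i
    have "u$i - t$i \<le> norm (t - u)"
      using component_le_norm_cart[of "u - t" i] by (simp add: norm_minus_commute)
    then show "Min (range (\<lambda>i. u$i)) - norm (t - u) \<le> t$i"
      using Min_comp_le[of u i] by linarith
  qed
  then show ?thesis by linarith
qed

lemma rng_lip: "\<bar>rng t - rng u\<bar> \<le> 2 * norm (t - u)"
  for t u :: "real^'n"
proof -
  have a: "Max (range (\<lambda>i. t$i)) \<le> Max (range (\<lambda>i. u$i)) + norm (t - u)" by (rule Max_comp_lip)
  have b: "Max (range (\<lambda>i. u$i)) \<le> Max (range (\<lambda>i. t$i)) + norm (t - u)"
    using Max_comp_lip[of u t] by (metis norm_minus_commute)
  have c: "Min (range (\<lambda>i. u$i)) \<le> Min (range (\<lambda>i. t$i)) + norm (t - u)" by (rule Min_comp_lip)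
  have d: "Min (range (\<lambda>i. t$i)) \<le> Min (range (\<lambda>i. u$i)) + norm (t - u)"
    using Min_comp_lip[where t=u and u=t] by (metis norm_minus_commute)
  show ?thesis unfolding rng_def abs_le_iff using a b c d by linarith
qed

lemma continuous_on_rng: "continuous_on S (rng :: real^'n \<Rightarrow> real)"
proof -
  have "2-lipschitz_on S (rng :: real^'n \<Rightarrow> real)"
    by (rule lipschitz_onI) (use rng_lip in \<open>auto simp: dist_norm\<close>)
  then show ?thesis by (rule lipschitz_on_continuous_on)
qed

lemma rng_nonneg: "0 \<le> rng t" for t :: "real^'n"
  unfolding rng_def using Max_comp_ge[of t] Min_comp_le[of t] by (meson diff_ge_0_iff_ge order_trans)

definition Ssum :: "real^'n^'p \<Rightarrow> real^'n" where
  "Ssum f = (\<Sum>k\<in>UNIV. f$k)"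

lemma loss_alt: "liso_loss Y lam f = 1/2 * (norm (Y - Ssum f))\<^sup>2 + lam * (\<Sum>k\<in>UNIV. rng (f$k))"
  unfolding liso_loss_def Ssum_def rng_def by simp

lemma upd_nth: "upd_comp f k t $ j = (if j = k then t else f$j)"
  by (simp add: upd_comp_def)

lemma upd_same: "upd_comp f k (f$k) = f"
  by (simp add: upd_comp_def vec_eq_iff)

lemma sum_upd_gen:
  fixes g :: "'p::finite \<Rightarrow> 'a::ab_group_add"
  shows "(\<Sum>j\<in>UNIV. if j = k then a else g j) = (\<Sum>j\<in>UNIV. g j) - g k + a"
proof -
  have "(\<Sum>j\<in>UNIV. if j = k then a else g j) = a + (\<Sum>j\<in>UNIV-{k}. if j = k then a else g j)"
    by (subst sum.remove[of _ k]) auto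
  also have "(\<Sum>j\<in>UNIV-{k}. if j = k then a else g j) = (\<Sum>j\<in>UNIV-{k}. g j)"
    by (rule sum.cong) auto
  also have "(\<Sum>j\<in>UNIV. g j) = g k + (\<Sum>j\<in>UNIV-{k}. g j)"
    by (subst sum.remove[of _ k]) auto
  ultimately show ?thesis by (simp add: algebra_simps)
qed

lemma Ssum_upd: "Ssum (upd_comp f k t) = Ssum f - f$k + t"
  unfolding Ssum_def upd_nth by (rule sum_upd_gen)

lemma loss_upd:
  "liso_loss Y lam (upd_comp f k t) =
     1/2 * (norm ((Y - Ssum f + f$k) - t))\<^sup>2 + lam * rng t + lam * ((\<Sum>j\<in>UNIV. rng (f$j)) - rng (f$k))"
proof -
  have "(\<Sum>j\<in>UNIV. rng (upd_comp f k t $ j)) = (\<Sum>j\<in>UNIV. rng (f$j)) - rng (f$k) + rng t"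
    unfolding upd_nth using sum_upd_gen[of k "rng t" "\<lambda>j. rng (f$j)"]
    by (simp add: if_distrib)
  then show ?thesis unfolding loss_alt Ssum_upd by (simp only:) (simp add: algebra_simps)
qed

lemma norm_sq_expand:
  fixes a b :: "'a::real_inner"
  shows "(norm a)\<^sup>2 = (norm b)\<^sup>2 + 2 * inner b (a - b) + (norm (a - b))\<^sup>2"
  by (simp add: power2_norm_eq_inner inner_diff inner_commute algebra_simps)



lemma Fk_convex:
  assumes t: "t \<in> Fk X k" and u: "u \<in> Fk X k" and e: "0 \<le> e" "e \<le> 1"
  shows "(1-e) *\<^sub>R t + e *\<^sub>R u \<in> Fk X k"
proof -
  have s: "(\<Sum>i\<in>UNIV. t$i) = 0" "(\<Sum>i\<in>UNIV. u$i) = 0" using t u unfolding Fk_def mem_Collect_eq by blast+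
  have "(\<Sum>i\<in>UNIV. ((1-e) *\<^sub>R t + e *\<^sub>R u)$i) = (1-e) * (\<Sum>i\<in>UNIV. t$i) + e * (\<Sum>i\<in>UNIV. u$i)"
    by (simp add: sum.distrib sum_distrib_left)
  then have 1: "(\<Sum>i\<in>UNIV. ((1-e) *\<^sub>R t + e *\<^sub>R u)$i) = 0" using s by simp
  have 2: "((1-e) *\<^sub>R t + e *\<^sub>R u)$i \<le> ((1-e) *\<^sub>R t + e *\<^sub>R u)$j" if "X$i$k < X$j$k" for i j
  proof -
    have "t$i \<le> t$j" "u$i \<le> u$j" using t u that unfolding Fk_def mem_Collect_eq by blast+
    then have "(1-e) * t$i + e * u$i \<le> (1-e) * t$j + e * u$j"
      using e by (intro add_mono mult_left_mono) auto
    then show ?thesis by simp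
  qed
  have 3: "((1-e) *\<^sub>R t + e *\<^sub>R u)$i = ((1-e) *\<^sub>R t + e *\<^sub>R u)$j" if "X$i$k = X$j$k" for i j
  proof -
    have "t$i = t$j" "u$i = u$j" using t u that unfolding Fk_def mem_Collect_eq by blast+
    then show ?thesis by simp
  qed
  show ?thesis unfolding Fk_def mem_Collect_eq
    using 1 2 3 by blast
qed

lemma Fk_closed: "closed (Fk X k)"
  unfolding Fk_def
  by (intro closed_Collect_conj closed_Collect_all closed_Collect_imp open_Collect_const
        closed_Collect_eq closed_Collect_le continuous_intros)

lemma zero_Fk: "0 \<in> Fk X k" by (simp add: Fk_def)

lemma norm_sq_shift: "(norm (a - e *\<^sub>R w))\<^sup>2 = (norm a)\<^sup>2 - 2*e*inner a w + e\<^sup>2*(norm w)\<^sup>2"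
  for a w :: "'a::real_inner"
  unfolding power2_norm_eq_inner
  by (simp add: inner_diff_left inner_diff_right inner_commute algebra_simps power2_eq_square)

definition phi :: "real \<Rightarrow> real^'n \<Rightarrow> real^'n \<Rightarrow> real" where
  "phi lam r t = 1/2 * (norm (r - t))\<^sup>2 + lam * rng t"

lemma phi_VI:
  fixes C :: "(real^'n) set"
  assumes lam: "0 \<le> lam"
    and conv: "\<And>t u e. t \<in> C \<Longrightarrow> u \<in> C \<Longrightarrow> 0 \<le> e \<Longrightarrow> e \<le> 1 \<Longrightarrow> (1-e) *\<^sub>R t + e *\<^sub>R u \<in> C"
    and t: "t \<in> C" and min: "\<forall>u\<in>C. phi lam r t \<le> phi lam r u" and u: "u \<in> C"
  shows "inner (r - t) (u - t) \<le> lam * (rng u - rng t)"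
proof (rule ccontr)
  assume neg: "\<not> ?thesis"
  define \<delta> where "\<delta> = inner (r - t) (u - t) - lam * (rng u - rng t)"
  have dpos: "\<delta> > 0" using neg by (simp add: \<delta>_def)
  define w where "w = u - t"
  have wne: "w \<noteq> 0" using dpos by (auto simp: \<delta>_def w_def)
  then have wpos: "(norm w)\<^sup>2 > 0" by simp
  define e where "e = min 1 (\<delta> / (norm w)\<^sup>2)"
  have e0: "0 < e" and e1: "e \<le> 1" using dpos wpos by (auto simp: e_def)
  have ew: "e * (norm w)\<^sup>2 \<le> \<delta>"
    using wpos by (simp add: e_def min_def field_simps split: if_splits)
  let ?v = "(1-e) *\<^sub>R t + e *\<^sub>R u"
  have vC: "?v \<in> C" using conv[OF t u] e0 e1 by simp
  have veq: "?v = t + e *\<^sub>R w" by (simp add: w_def algebra_simps)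
  have nq: "(norm (r - ?v))\<^sup>2 = (norm (r - t))\<^sup>2 - 2 * e * inner (r - t) w + e\<^sup>2 * (norm w)\<^sup>2"
  proof -
    have "r - ?v = (r - t) - e *\<^sub>R w" unfolding veq by simp
    then show ?thesis by (simp only: norm_sq_shift)
  qed
  have rv: "rng ?v \<le> (1-e) * rng t + e * rng u" using e0 e1 by (intro rng_convex) auto
  have "phi lam r ?v \<le> phi lam r t - e * \<delta> + e\<^sup>2 / 2 * (norm w)\<^sup>2"
  proof -
    have "lam * rng ?v \<le> lam * ((1-e) * rng t + e * rng u)" using rv lam by (rule mult_left_mono)
    then show ?thesis unfolding phi_def nq \<delta>_def w_def by (simp add: algebra_simps)
  qed
  also have "e\<^sup>2 / 2 * (norm w)\<^sup>2 \<le> e * \<delta> / 2"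
  proof -
    have "e * (e * (norm w)\<^sup>2) \<le> e * \<delta>" using ew e0 by (intro mult_left_mono) auto
    moreover have "e\<^sup>2 / 2 * (norm w)\<^sup>2 = (e * (e * (norm w)\<^sup>2)) / 2" by (simp add: power2_eq_square)
    ultimately show ?thesis by linarith
  qed
  finally have "phi lam r ?v < phi lam r t" using mult_pos_pos[OF e0 dpos] by linarith
  with min vC show False by force
qed

lemma phi_strong:
  fixes C :: "(real^'n) set"
  assumes lam: "0 \<le> lam"
    and conv: "\<And>t u e. t \<in> C \<Longrightarrow> u \<in> C \<Longrightarrow> 0 \<le> e \<Longrightarrow> e \<le> 1 \<Longrightarrow> (1-e) *\<^sub>R t + e *\<^sub>R u \<in> C"
    and t: "t \<in> C" and min: "\<forall>u\<in>C. phi lam r t \<le> phi lam r u" and u: "u \<in> C"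
  shows "phi lam r t + 1/2 * (norm (u - t))\<^sup>2 \<le> phi lam r u"
proof -
  have vi: "inner (r - t) (u - t) \<le> lam * (rng u - rng t)" by (rule phi_VI[OF lam conv t min u])
  have "(norm (r - u))\<^sup>2 = (norm (r - t))\<^sup>2 - 2 * inner (r - t) (u - t) + (norm (u - t))\<^sup>2"
    using norm_sq_shift[of "r - t" 1 "u - t"] by simp
  then show ?thesis using vi unfolding phi_def by (simp add: algebra_simps)
qed

lemma phi_exists:
  assumes lam: "0 \<le> lam" and C: "closed C" and z: "0 \<in> C"
  shows "\<exists>t\<in>C. \<forall>u\<in>C. phi lam r t \<le> phi lam (r :: real^'n) u"
proof -
  let ?K = "C \<inter> cball r (norm r)"
  have "compact ?K" using C by (intro closed_Int_compact) auto
  moreover have "0 \<in> ?K" using z by (simp add: dist_norm)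
  moreover have "continuous_on ?K (phi lam r)"
    unfolding phi_def by (intro continuous_intros continuous_on_rng)
  ultimately obtain t where t: "t \<in> ?K" and tm: "\<forall>u\<in>?K. phi lam r t \<le> phi lam r u"
    using continuous_attains_inf[of ?K "phi lam r"] by blast
  have "phi lam r t \<le> phi lam r u" if u: "u \<in> C" for u
  proof (cases "u \<in> cball r (norm r)")
    case True then show ?thesis using tm u by auto
  next
    case False
    then have "norm (r - u) > norm r" by (simp add: dist_norm)
    then have "(norm r)\<^sup>2 < (norm (r - u))\<^sup>2" by (simp add: power_strict_mono)
    moreover have "phi lam r 0 = 1/2 * (norm r)\<^sup>2" by (simp add: phi_def rng_def)
    moreover have "phi lam r t \<le> phi lam r 0" using tm \<open>0 \<in> ?K\<close> by blast
    moreover have "1/2 * (norm (r - u))\<^sup>2 \<le> phi lam r u" using lam rng_nonneg[of u] by (simp add: phi_def)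
    ultimately show ?thesis by linarith
  qed
  then show ?thesis using t by blast
qed



lemma norm_single:
  fixes x :: "'a::real_normed_vector^'p"
  assumes "\<And>j. j \<noteq> k \<Longrightarrow> x$j = 0"
  shows "norm x = norm (x$k)"
proof -
  have "(\<Sum>i\<in>UNIV. (norm (x$i))\<^sup>2) = (\<Sum>i\<in>UNIV. if i = k then (norm (x$k))\<^sup>2 else 0)"
    by (rule sum.cong) (auto simp: assms)
  also have "\<dots> = (norm (x$k))\<^sup>2" by simp
  finally show ?thesis unfolding norm_vec_def L2_set_def by simp
qed

abbreviation resid :: "real^'n \<Rightarrow> real^'n^'p \<Rightarrow> real \<Rightarrow> real^'n^'p \<Rightarrow> 'p \<Rightarrow> real^'n" where
  "resid Y X lam f k \<equiv> Y - Ssum f + f$k"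

lemma loss_upd_phi:
  "liso_loss Y lam (upd_comp f k t) = phi lam (Y - Ssum f + f$k) t + lam * ((\<Sum>j\<in>UNIV. rng (f$j)) - rng (f$k))"
  unfolding loss_upd phi_def by simp

lemma Fk_conv': "t \<in> Fk X k \<Longrightarrow> u \<in> Fk X k \<Longrightarrow> 0 \<le> e \<Longrightarrow> e \<le> 1 \<Longrightarrow> (1-e) *\<^sub>R t + e *\<^sub>R u \<in> Fk X k"
  by (rule Fk_convex)

lemma block_min_props:
  assumes lam: "0 \<le> lam"
  shows "block_min Y X lam f k \<in> Fk X k \<and>
    (\<forall>u\<in>Fk X k. phi lam (Y - Ssum f + f$k) (block_min Y X lam f k) \<le> phi lam (Y - Ssum f + f$k) u)"
proof -
  let ?r = "Y - Ssum f + f$k"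
  let ?P = "\<lambda>t. t \<in> Fk X k \<and>
      (\<forall>t'\<in>Fk X k. liso_loss Y lam (upd_comp f k t) \<le> liso_loss Y lam (upd_comp f k t'))"
  have eqv: "?P t \<longleftrightarrow> t \<in> Fk X k \<and> (\<forall>u\<in>Fk X k. phi lam ?r t \<le> phi lam ?r u)" for t
    unfolding loss_upd_phi by simp
  obtain t where t: "t \<in> Fk X k" "\<forall>u\<in>Fk X k. phi lam ?r t \<le> phi lam ?r u"
    using phi_exists[OF lam Fk_closed zero_Fk] by blast
  have uniq: "t' = t" if "?P t'" for t'
  proof -
    have t': "t' \<in> Fk X k" "\<forall>u\<in>Fk X k. phi lam ?r t' \<le> phi lam ?r u" using that eqv by auto
    have "phi lam ?r t + 1/2 * (norm (t' - t))\<^sup>2 \<le> phi lam ?r t'"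
      by (rule phi_strong[OF lam Fk_conv' t(1) t(2) t'(1)])
    moreover have "phi lam ?r t' \<le> phi lam ?r t" using t' t by auto
    ultimately have "(norm (t' - t))\<^sup>2 \<le> 0" by linarith
    then show ?thesis by simp
  qed
  have "?P t" using t eqv by blast
  then have "block_min Y X lam f k = t"
    unfolding block_min_def using uniq by (rule the_equality)
  then show ?thesis using t by simp
qed

lemma block_step_nth: "block_step Y X lam f k $ j = (if j = k then block_min Y X lam f k else f$j)"
  by (simp add: block_step_def upd_nth)

lemma block_step_feasible:
  assumes "0 \<le> lam" "f \<in> feasible X"
  shows "block_step Y X lam f k \<in> feasible X"
  using assms block_min_props[OF assms(1), of Y X f k]
  unfolding feasible_def mem_Collect_eq block_step_nth by auto

lemma block_step_decrease:
  assumes lam: "0 \<le> lam" and f: "f \<in> feasible X"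
  shows "liso_loss Y lam (block_step Y X lam f k) + 1/2 * (norm (block_min Y X lam f k - f$k))\<^sup>2
           \<le> liso_loss Y lam f"
proof -
  let ?r = "Y - Ssum f + f$k"
  let ?t = "block_min Y X lam f k"
  have fk: "f$k \<in> Fk X k" using f by (simp add: feasible_def)
  have p: "?t \<in> Fk X k" "\<forall>u\<in>Fk X k. phi lam ?r ?t \<le> phi lam ?r u" using block_min_props[OF lam] by blast+
  have "phi lam ?r ?t + 1/2 * (norm (f$k - ?t))\<^sup>2 \<le> phi lam ?r (f$k)"
    by (rule phi_strong[OF lam Fk_conv' p(1) p(2) fk])
  moreover have "liso_loss Y lam f = liso_loss Y lam (upd_comp f k (f$k))" by (simp add: upd_same)
  ultimately show ?thesis
    unfolding block_step_def loss_upd_phi by (simp add: norm_minus_commute)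
qed

lemma Ssum_block_step: "Ssum (block_step Y X lam f k) = Ssum f - f$k + block_min Y X lam f k"
  unfolding block_step_def by (rule Ssum_upd)

lemma block_step_VI:
  assumes lam: "0 \<le> lam" and u: "u \<in> Fk X k"
  shows "inner (Y - Ssum (block_step Y X lam f k)) (u - block_step Y X lam f k $ k)
           \<le> lam * (rng u - rng (block_step Y X lam f k $ k))"
proof -
  let ?r = "Y - Ssum f + f$k"
  let ?t = "block_min Y X lam f k"
  have p: "?t \<in> Fk X k" "\<forall>u\<in>Fk X k. phi lam ?r ?t \<le> phi lam ?r u" using block_min_props[OF lam] by blast+
  have "inner (?r - ?t) (u - ?t) \<le> lam * (rng u - rng ?t)"
    by (rule phi_VI[OF lam Fk_conv' p(1) p(2) u])
  moreover have "?r - ?t = Y - Ssum (block_step Y X lam f k)" unfolding Ssum_block_step by simp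
  ultimately show ?thesis by (simp add: block_step_nth)
qed

lemma block_step_dist: "norm (block_step Y X lam f k - f) = norm (block_min Y X lam f k - f$k)"
proof -
  have "norm (block_step Y X lam f k - f) = norm ((block_step Y X lam f k - f)$k)"
    by (rule norm_single) (simp add: block_step_nth)
  then show ?thesis by (simp add: block_step_nth)
qed



fun clen :: "real^'n \<Rightarrow> real^'p^'n \<Rightarrow> real \<Rightarrow> real^'n^'p \<Rightarrow> 'p list \<Rightarrow> real" where
  "clen Y X lam f [] = 0"
| "clen Y X lam f (k#\<sigma>) = norm (block_min Y X lam f k - f$k) + clen Y X lam (block_step Y X lam f k) \<sigma>"

lemma clen_nonneg: "0 \<le> clen Y X lam f \<sigma>"
  by (induction \<sigma> arbitrary: f) auto

lemma foldl_feasible: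
  assumes "0 \<le> lam" "f \<in> feasible X"
  shows "foldl (block_step Y X lam) f \<sigma> \<in> feasible X"
  using assms(2) by (induction \<sigma> arbitrary: f) (auto intro: block_step_feasible[OF assms(1)])

lemma foldl_nth_notin:
  assumes "k \<notin> set \<sigma>"
  shows "foldl (block_step Y X lam) f \<sigma> $ k = f$k"
  using assms by (induction \<sigma> arbitrary: f) (auto simp: block_step_nth)

lemma foldl_dist:
  shows "norm (foldl (block_step Y X lam) f \<sigma> - f) \<le> clen Y X lam f \<sigma> \<and>
         norm (Ssum (foldl (block_step Y X lam) f \<sigma>) - Ssum f) \<le> clen Y X lam f \<sigma>"
proof (induction \<sigma> arbitrary: f)
  case Nil then show ?case by simp
next
  case (Cons k \<sigma>)
  let ?f1 = "block_step Y X lam f k"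
  let ?g = "foldl (block_step Y X lam) ?f1 \<sigma>"
  have IH: "norm (?g - ?f1) \<le> clen Y X lam ?f1 \<sigma>" "norm (Ssum ?g - Ssum ?f1) \<le> clen Y X lam ?f1 \<sigma>"
    using Cons.IH[of ?f1] by auto
  have s1: "norm (?f1 - f) = norm (block_min Y X lam f k - f$k)" by (rule block_step_dist)
  have s2: "norm (Ssum ?f1 - Ssum f) = norm (block_min Y X lam f k - f$k)"
    unfolding Ssum_block_step by (simp add: algebra_simps)
  have "norm (?g - f) \<le> norm (?g - ?f1) + norm (?f1 - f)"
    using norm_triangle_ineq[of "?g - ?f1" "?f1 - f"] by simp
  moreover have "norm (Ssum ?g - Ssum f) \<le> norm (Ssum ?g - Ssum ?f1) + norm (Ssum ?f1 - Ssum f)"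
    using norm_triangle_ineq[of "Ssum ?g - Ssum ?f1" "Ssum ?f1 - Ssum f"] by simp
  ultimately show ?case using IH s1 s2 by simp
qed

lemma foldl_decrease:
  assumes lam: "0 \<le> lam"
  shows "f \<in> feasible X \<Longrightarrow>
    liso_loss Y lam (foldl (block_step Y X lam) f \<sigma>) \<le> liso_loss Y lam f \<and>
    (clen Y X lam f \<sigma>)\<^sup>2 \<le> 2 * real (length \<sigma>) * (liso_loss Y lam f - liso_loss Y lam (foldl (block_step Y X lam) f \<sigma>))"
proof (induction \<sigma> arbitrary: f)
  case Nil then show ?case by simp
next
  case (Cons k \<sigma>)
  let ?f1 = "block_step Y X lam f k"
  let ?g = "foldl (block_step Y X lam) ?f1 \<sigma>"
  let ?a = "norm (block_min Y X lam f k - f$k)"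
  let ?b = "clen Y X lam ?f1 \<sigma>"
  let ?n = "real (length \<sigma>)"
  have f1: "?f1 \<in> feasible X" using block_step_feasible[OF lam Cons.prems] .
  have IH: "liso_loss Y lam ?g \<le> liso_loss Y lam ?f1" "?b\<^sup>2 \<le> 2 * ?n * (liso_loss Y lam ?f1 - liso_loss Y lam ?g)"
    using Cons.IH[OF f1] by auto
  have st: "liso_loss Y lam ?f1 + 1/2 * ?a\<^sup>2 \<le> liso_loss Y lam f"
    by (rule block_step_decrease[OF lam Cons.prems])
  have a0: "0 \<le> ?a" by simp
  have b0: "0 \<le> ?b" by (rule clen_nonneg)
  have main: "(?a + ?b)\<^sup>2 \<le> 2 * (?n + 1) * (liso_loss Y lam f - liso_loss Y lam ?g)"
  proof (cases "\<sigma> = []")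
    case True
    then show ?thesis using st by simp
  next
    case False
    then have npos: "?n > 0" by simp
    have sq: "0 \<le> (?n * ?a - ?b)\<^sup>2" by simp
    have "?n * (?a + ?b)\<^sup>2 \<le> ?n * (?n + 1) * ?a\<^sup>2 + (?n + 1) * ?b\<^sup>2"
      using sq by (simp add: power2_eq_square algebra_simps)
    also have "(?n + 1) * ?b\<^sup>2 \<le> (?n + 1) * (2 * ?n * (liso_loss Y lam ?f1 - liso_loss Y lam ?g))"
      using IH(2) npos by (intro mult_left_mono) auto
    also have "?n * (?n + 1) * ?a\<^sup>2 + (?n + 1) * (2 * ?n * (liso_loss Y lam ?f1 - liso_loss Y lam ?g))
        = ?n * (2 * (?n + 1) * (1/2 * ?a\<^sup>2 + liso_loss Y lam ?f1 - liso_loss Y lam ?g))"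
      by (simp add: algebra_simps)
    also have "\<dots> \<le> ?n * (2 * (?n + 1) * (liso_loss Y lam f - liso_loss Y lam ?g))"
      using st npos by (intro mult_left_mono) auto
    finally show ?thesis using npos by simp
  qed
  have L: "liso_loss Y lam ?g \<le> liso_loss Y lam f" using IH(1) st zero_le_power2[of ?a] by linarith
  have e1: "clen Y X lam f (k#\<sigma>) = ?a + ?b" by simp
  have e2: "real (length (k#\<sigma>)) = ?n + 1" by simp
  have e3: "foldl (block_step Y X lam) f (k#\<sigma>) = ?g" by simp
  show ?case unfolding e1 e2 e3 using main L by simp
qed

lemma foldl_VI:
  assumes lam: "0 \<le> lam"
  shows "distinct \<sigma> \<Longrightarrow> k \<in> set \<sigma> \<Longrightarrow> u \<in> Fk X k \<Longrightarrow>
    inner (Y - Ssum (foldl (block_step Y X lam) f \<sigma>)) (u - foldl (block_step Y X lam) f \<sigma> $ k)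
      \<le> lam * (rng u - rng (foldl (block_step Y X lam) f \<sigma> $ k))
         + clen Y X lam f \<sigma> * norm (u - foldl (block_step Y X lam) f \<sigma> $ k)"
proof (induction \<sigma> arbitrary: f)
  case Nil then show ?case by simp
next
  case (Cons k' \<sigma>)
  let ?f1 = "block_step Y X lam f k'"
  let ?g = "foldl (block_step Y X lam) ?f1 \<sigma>"
  let ?a = "norm (block_min Y X lam f k' - f$k')"
  have a0: "0 \<le> ?a" by simp
  have nv: "0 \<le> norm (u - ?g$k)" by simp
  show ?case
  proof (cases "k \<in> set \<sigma>")
    case True
    have "inner (Y - Ssum ?g) (u - ?g$k) \<le> lam * (rng u - rng (?g$k)) + clen Y X lam ?f1 \<sigma> * norm (u - ?g$k)"
      using Cons.IH[of ?f1] Cons.prems True by auto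
    also have "clen Y X lam ?f1 \<sigma> * norm (u - ?g$k) \<le> clen Y X lam f (k'#\<sigma>) * norm (u - ?g$k)"
      using a0 nv by (intro mult_right_mono) auto
    finally show ?thesis by simp
  next
    case False
    then have kk: "k = k'" using Cons.prems by auto
    have gk: "?g$k = ?f1$k" using False by (rule foldl_nth_notin)
    have vi: "inner (Y - Ssum ?f1) (u - ?f1$k) \<le> lam * (rng u - rng (?f1$k))"
      using block_step_VI[OF lam, of u X k Y f] Cons.prems kk by simp
    have "inner (Y - Ssum ?g) (u - ?g$k) = inner (Y - Ssum ?f1) (u - ?g$k) + inner (Ssum ?f1 - Ssum ?g) (u - ?g$k)"
      by (simp add: inner_diff_left)
    also have "inner (Ssum ?f1 - Ssum ?g) (u - ?g$k) \<le> norm (Ssum ?f1 - Ssum ?g) * norm (u - ?g$k)"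
      by (rule norm_cauchy_schwarz)
    also have "norm (Ssum ?f1 - Ssum ?g) \<le> clen Y X lam f (k'#\<sigma>)"
    proof -
      have "norm (Ssum ?g - Ssum ?f1) \<le> clen Y X lam ?f1 \<sigma>" using foldl_dist by blast
      moreover have "clen Y X lam ?f1 \<sigma> \<le> clen Y X lam f (k'#\<sigma>)"
      proof -
        have "clen Y X lam f (k'#\<sigma>) = ?a + clen Y X lam ?f1 \<sigma>" by simp
        then show ?thesis using a0 by linarith
      qed
      moreover have "norm (Ssum ?f1 - Ssum ?g) = norm (Ssum ?g - Ssum ?f1)" by (rule norm_minus_commute)
      ultimately show ?thesis by linarith
    qed
    then have "norm (Ssum ?f1 - Ssum ?g) * norm (u - ?g$k) \<le> clen Y X lam f (k'#\<sigma>) * norm (u - ?g$k)"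
      using nv by (rule mult_right_mono)
    finally show ?thesis using vi gk by simp
  qed
qed



lemma seq_lemma:
  fixes c :: "nat \<Rightarrow> real"
  assumes c0: "\<And>m. 0 \<le> c m" and bnd: "\<And>N. (\<Sum>i<N. (c i)\<^sup>2) \<le> B"
    and A: "0 \<le> A" and eps: "0 < \<epsilon>"
    and big: "\<And>m. \<epsilon> \<le> c m * (A + (\<Sum>i<Suc m. c i))"
  shows False
proof -
  have summ: "summable (\<lambda>i. (c i)\<^sup>2)"
    by (rule summableI_nonneg_bounded[where x=B]) (auto intro: bnd)
  have B0: "0 \<le> B" using bnd[of 0] by simp
  define K where "K = 2 * A\<^sup>2 + 2 * B"
  have Kne: "K \<noteq> 0"
  proof
    assume "K = 0"
    then have "A = 0" "B = 0" using B0 unfolding K_def by (auto simp: add_nonneg_eq_0_iff)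
    then have "c 0 = 0" using bnd[of 1] by simp
    then show False using big[of 0] eps \<open>A = 0\<close> by simp
  qed
  have K0: "0 < K" using Kne B0 unfolding K_def
    by (metis add_nonneg_nonneg less_eq_real_def mult_nonneg_nonneg zero_le_power2 zero_le_numeral)
  have low: "\<epsilon>\<^sup>2 / K * inverse (real (Suc m)) \<le> (c m)\<^sup>2" for m
  proof -
    define S where "S = (\<Sum>i<Suc m. c i)"
    define T where "T = A + S"
    have S0: "0 \<le> S" unfolding S_def using c0 by (simp add: sum_nonneg)
    have Tpos: "0 < T"
    proof -
      have "0 < c m * T" using big[of m] eps unfolding T_def S_def by linarith
      moreover have "0 \<le> T" using A S0 by (simp add: T_def)
      ultimately show ?thesis using c0[of m] by (metis less_eq_real_def mult_zero_right)
    qed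
    have "S\<^sup>2 \<le> (\<Sum>i<Suc m. (c i)\<^sup>2) * real (card {..<Suc m})"
      unfolding S_def by (rule sum_squared_le_sum_of_squares)
    also have "\<dots> \<le> B * real (Suc m)" using bnd[of "Suc m"] by (simp add: mult_right_mono)
    finally have S2: "S\<^sup>2 \<le> B * real (Suc m)" .
    have "T\<^sup>2 \<le> 2 * A\<^sup>2 + 2 * S\<^sup>2"
    proof -
      have "T\<^sup>2 = 2 * A\<^sup>2 + 2 * S\<^sup>2 - (A - S)\<^sup>2" unfolding T_def by (simp add: power2_eq_square algebra_simps)
      moreover have "0 \<le> (A - S)\<^sup>2" by simp
      ultimately show ?thesis by linarith
    qed
    also have "\<dots> \<le> 2 * A\<^sup>2 * real (Suc m) + 2 * (B * real (Suc m))"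
    proof -
      have "A\<^sup>2 \<le> A\<^sup>2 * real (Suc m)" by (simp add: algebra_simps)
      then show ?thesis using S2 by linarith
    qed
    also have "\<dots> = K * real (Suc m)" by (simp add: K_def algebra_simps)
    finally have T2: "T\<^sup>2 \<le> K * real (Suc m)" .
    have Kpos: "0 < K"
    proof -
      have "0 < T\<^sup>2" using Tpos by simp
      then have "0 < K * real (Suc m)" using T2 by linarith
      then show ?thesis by (simp add: zero_less_mult_iff)
    qed
    have "\<epsilon>\<^sup>2 \<le> (c m * T)\<^sup>2" using big[of m] eps unfolding T_def S_def
      by (intro power_mono) auto
    also have "\<dots> = (c m)\<^sup>2 * T\<^sup>2" by (simp add: power_mult_distrib)
    also have "\<dots> \<le> (c m)\<^sup>2 * (K * real (Suc m))" using T2 by (intro mult_left_mono) auto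
    finally have "\<epsilon>\<^sup>2 \<le> (c m)\<^sup>2 * (K * real (Suc m))" .
    moreover have P: "0 < K * real (Suc m)" using Kpos by simp
    ultimately have "\<epsilon>\<^sup>2 / (K * real (Suc m)) \<le> (c m)\<^sup>2"
      by (subst pos_divide_le_eq[OF P])
    moreover have "\<epsilon>\<^sup>2 / K * inverse (real (Suc m)) = \<epsilon>\<^sup>2 / (K * real (Suc m))"
      by (simp add: divide_inverse)
    ultimately show ?thesis by simp
  qed
  have "summable (\<lambda>m. \<epsilon>\<^sup>2 / K * inverse (real (Suc m)))"
    by (rule summable_comparison_test'[OF summ, of 0]) (use low K0 in \<open>auto\<close>)
  moreover have "\<epsilon>\<^sup>2 / K \<noteq> 0"
    using Kne eps by simp
  ultimately have "summable (\<lambda>m. inverse (real (Suc m)))" by simp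
  then have "summable (\<lambda>n. inverse (real n))"
    using summable_Suc_iff[of "\<lambda>n. inverse (real n)"] by simp
  then show False using not_summable_harmonic[where 'a=real] by simp
qed

lemma cycle_gap:
  fixes f fs :: "real^'n^'p"
  assumes lam: "0 \<le> lam" and \<sigma>: "distinct \<sigma>" "set \<sigma> = UNIV"
    and fs: "fs \<in> feasible X"
  shows "liso_loss Y lam (cycle Y X lam f \<sigma>) - liso_loss Y lam fs
           \<le> real (card (UNIV::'p set)) * clen Y X lam f \<sigma> * norm (fs - cycle Y X lam f \<sigma>)"
proof -
  let ?g = "cycle Y X lam f \<sigma>"
  let ?c = "clen Y X lam f \<sigma>"
  let ?b = "Y - Ssum ?g"
  have gdef: "?g = foldl (block_step Y X lam) f \<sigma>" by (simp add: cycle_def)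
  have vi: "inner ?b (fs$k - ?g$k) \<le> lam * (rng (fs$k) - rng (?g$k)) + ?c * norm (fs$k - ?g$k)" for k
  proof -
    have "fs$k \<in> Fk X k" using fs by (simp add: feasible_def)
    then show ?thesis unfolding gdef using foldl_VI[OF lam \<sigma>(1)] \<sigma>(2) by blast
  qed
  have sumvi: "(\<Sum>k\<in>UNIV. inner ?b (fs$k - ?g$k)) \<le>
      lam * (\<Sum>k\<in>UNIV. rng (fs$k)) - lam * (\<Sum>k\<in>UNIV. rng (?g$k)) + ?c * (\<Sum>k\<in>UNIV. norm (fs$k - ?g$k))"
  proof -
    have "(\<Sum>k\<in>UNIV. inner ?b (fs$k - ?g$k)) \<le> (\<Sum>k\<in>UNIV. lam * (rng (fs$k) - rng (?g$k)) + ?c * norm (fs$k - ?g$k))"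
      by (rule sum_mono) (rule vi)
    also have "\<dots> = lam * (\<Sum>k\<in>UNIV. rng (fs$k)) - lam * (\<Sum>k\<in>UNIV. rng (?g$k)) + ?c * (\<Sum>k\<in>UNIV. norm (fs$k - ?g$k))"
      by (simp add: sum.distrib sum_distrib_left sum_subtractf algebra_simps)
    finally show ?thesis .
  qed
  have sinner: "(\<Sum>k\<in>UNIV. inner ?b (fs$k - ?g$k)) = inner ?b (Ssum fs - Ssum ?g)"
    by (simp add: Ssum_def inner_sum_right sum_subtractf inner_diff_right)
  have nq: "(norm (Y - Ssum fs))\<^sup>2 = (norm ?b)\<^sup>2 + 2 * inner ?b ((Y - Ssum fs) - ?b) + (norm ((Y - Ssum fs) - ?b))\<^sup>2"
    by (rule norm_sq_expand)
  have "(Y - Ssum fs) - ?b = -(Ssum fs - Ssum ?g)" by simp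
  then have nq2: "1/2 * (norm (Y - Ssum fs))\<^sup>2 \<ge> 1/2 * (norm ?b)\<^sup>2 - inner ?b (Ssum fs - Ssum ?g)"
  proof -
    have "inner ?b ((Y - Ssum fs) - ?b) = - inner ?b (Ssum fs - Ssum ?g)"
      using \<open>(Y - Ssum fs) - ?b = -(Ssum fs - Ssum ?g)\<close> by (metis inner_minus_right)
    then show ?thesis using nq zero_le_power2[of "norm ((Y - Ssum fs) - ?b)"] by linarith
  qed
  have nsum: "(\<Sum>k\<in>UNIV. norm (fs$k - ?g$k)) \<le> real (card (UNIV::'p set)) * norm (fs - ?g)"
  proof -
    have "norm (fs$k - ?g$k) \<le> norm (fs - ?g)" for k
      using Finite_Cartesian_Product.norm_nth_le[of "fs - ?g" k] by simp
    then show ?thesis by (rule sum_bounded_above)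
  qed
  have c0: "0 \<le> ?c" by (rule clen_nonneg)
  have "?c * (\<Sum>k\<in>UNIV. norm (fs$k - ?g$k)) \<le> ?c * (real (card (UNIV::'p set)) * norm (fs - ?g))"
    using nsum c0 by (rule mult_left_mono)
  then show ?thesis
    using sumvi sinner nq2 unfolding loss_alt by (simp add: algebra_simps)
qed



lemma loss_nonneg: "0 \<le> lam \<Longrightarrow> 0 \<le> liso_loss Y lam f"
  unfolding loss_alt by (intro add_nonneg_nonneg mult_nonneg_nonneg sum_nonneg rng_nonneg) auto

lemma traj_part1:
  fixes Y :: "real^'n" and X :: "real^'p^'n" and f0 :: "real^'n^'p"
  assumes lam: "0 \<le> lam" and f0: "f0 \<in> feasible X"
    and perm: "\<forall>m. \<omega> !! m \<in> permutations_of_set (UNIV::'p set)"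
  shows "antimono (\<lambda>m. liso_loss Y lam (backfit Y X lam f0 \<omega> m)) \<and>
    (\<lambda>m. liso_loss Y lam (backfit Y X lam f0 \<omega> m)) \<longlonglongrightarrow> (INF g\<in>feasible X. liso_loss Y lam g)"
proof -
  define F where "F = backfit Y X lam f0 \<omega>"
  define L :: "real^'n^'p \<Rightarrow> real" where "L = liso_loss Y lam"
  define c where "c m = clen Y X lam (F m) (\<omega> !! m)" for m
  define p where "p = real (card (UNIV::'p set))"
  have p1: "1 \<le> p" unfolding p_def by (simp add: Suc_le_eq)
  have \<sigma>: "distinct (\<omega> !! m)" "set (\<omega> !! m) = UNIV" "real (length (\<omega> !! m)) = p" for m
  proof -
    show d: "distinct (\<omega> !! m)" "set (\<omega> !! m) = UNIV" using perm by (auto simp: permutations_of_set_def)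
    show "real (length (\<omega> !! m)) = p" unfolding p_def using distinct_card[OF d(1)] d(2) by simp
  qed
  have Fsuc: "F (Suc m) = foldl (block_step Y X lam) (F m) (\<omega> !! m)" for m
    by (simp add: F_def cycle_def)
  have feas: "F m \<in> feasible X" for m
    by (induction m) (auto simp: Fsuc F_def[symmetric] intro: foldl_feasible[OF lam], simp add: F_def f0)
  have dec: "L (F (Suc m)) \<le> L (F m)" "(c m)\<^sup>2 \<le> 2 * p * (L (F m) - L (F (Suc m)))" for m
    using foldl_decrease[OF lam feas[of m], of Y "\<omega> !! m"] \<sigma>(3)[of m]
    unfolding Fsuc[symmetric] c_def L_def by auto
  have step: "norm (F (Suc m) - F m) \<le> c m" for m
    using foldl_dist[of Y X lam "F m" "\<omega> !! m"] unfolding Fsuc[symmetric] c_def by auto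
  have gap: "L (F (Suc m)) - L fs \<le> p * c m * norm (fs - F (Suc m))" if fs: "fs \<in> feasible X" for fs m
    using cycle_gap[OF lam \<sigma>(1,2) fs, of Y "F m"] unfolding p_def c_def L_def
    by (simp add: F_def)
  have L0: "0 \<le> L g" for g unfolding L_def by (rule loss_nonneg[OF lam])
  have mono: "antimono (\<lambda>m. L (F m))" by (rule decseq_SucI) (use dec in auto)
  obtain l where l: "(\<lambda>m. L (F m)) \<longlonglongrightarrow> l" "\<forall>i. l \<le> L (F i)"
    using decseq_convergent[OF mono, of 0] L0 by blast
  have bnd: "(\<Sum>i<N. (c i)\<^sup>2) \<le> 2 * p * (L (F 0) - L (F N))" for N
  proof (induction N)
    case 0 then show ?case by simp
  next
    case (Suc N) then show ?case using dec(2)[of N] by (simp add: algebra_simps)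
  qed
  have bnd2: "(\<Sum>i<N. (c i)\<^sup>2) \<le> 2 * p * L (F 0)" for N
  proof -
    have "2 * p * (L (F 0) - L (F N)) \<le> 2 * p * L (F 0)" using p1 L0[of "F N"] by simp
    then show ?thesis using bnd[of N] by linarith
  qed
  have nb: "norm (fs - F (Suc m)) \<le> norm (fs - F 0) + (\<Sum>i<Suc m. c i)" for fs m
  proof (induction m)
    case 0
    have "norm (fs - F (Suc 0)) \<le> norm (fs - F 0) + norm (F 0 - F (Suc 0))"
      by (rule norm_diff_triangle_ineq[of fs "F 0" "F 0" "F (Suc 0)", simplified])
    then show ?case using step[of 0] by (simp add: norm_minus_commute)
  next
    case (Suc m)
    have "norm (fs - F (Suc (Suc m))) \<le> norm (fs - F (Suc m)) + norm (F (Suc m) - F (Suc (Suc m)))"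
      using norm_triangle_ineq[of "fs - F (Suc m)" "F (Suc m) - F (Suc (Suc m))"] by simp
    then show ?case using Suc.IH step[of "Suc m"] by (simp add: norm_minus_commute)
  qed
  have c0: "0 \<le> c m" for m unfolding c_def by (rule clen_nonneg)
  have lle: "l \<le> L fs" if fs: "fs \<in> feasible X" for fs
  proof (rule ccontr)
    assume "\<not> l \<le> L fs"
    define \<epsilon> where "\<epsilon> = (l - L fs) / p"
    have eps: "0 < \<epsilon>" using \<open>\<not> l \<le> L fs\<close> p1 by (simp add: \<epsilon>_def)
    have big: "\<epsilon> \<le> c m * (norm (fs - F 0) + (\<Sum>i<Suc m. c i))" for m
    proof -
      have "l - L fs \<le> p * c m * norm (fs - F (Suc m))" using gap[OF fs, of m] l(2)[rule_format, of "Suc m"] by linarith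
      also have "\<dots> \<le> p * c m * (norm (fs - F 0) + (\<Sum>i<Suc m. c i))"
        using nb[of fs m] p1 c0[of m] by (intro mult_left_mono) auto
      finally show ?thesis using p1 unfolding \<epsilon>_def by (simp add: divide_le_eq mult.assoc mult.commute)
    qed
    show False by (rule seq_lemma[OF c0 bnd2 norm_ge_zero eps big])
  qed
  have ne: "feasible X \<noteq> {}" using f0 by auto
  have bdd: "bdd_below (L ` feasible X)" using L0 by (intro bdd_belowI) auto
  have "l \<le> (INF g\<in>feasible X. L g)" using ne lle by (intro cINF_greatest) auto
  moreover have "(INF g\<in>feasible X. L g) \<le> l"
  proof (rule LIMSEQ_le_const[OF l(1)])
    show "\<exists>N. \<forall>n\<ge>N. (INF g\<in>feasible X. L g) \<le> L (F n)"
      using feas bdd by (intro exI[of _ 0] allI impI cINF_lower) auto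
  qed
  ultimately have "l = (INF g\<in>feasible X. L g)" by simp
  then show ?thesis using mono l(1) unfolding F_def L_def by simp
qed



lemma unique_min_conv:
  fixes L :: "'a::euclidean_space \<Rightarrow> real" and S :: "'a set"
  assumes S: "closed S"
    and Sconv: "\<And>x y e. x \<in> S \<Longrightarrow> y \<in> S \<Longrightarrow> 0 \<le> e \<Longrightarrow> e \<le> 1 \<Longrightarrow> (1-e) *\<^sub>R x + e *\<^sub>R y \<in> S"
    and Lconv: "\<And>x y e. x \<in> S \<Longrightarrow> y \<in> S \<Longrightarrow> 0 \<le> e \<Longrightarrow> e \<le> 1 \<Longrightarrow>
                   L ((1-e) *\<^sub>R x + e *\<^sub>R y) \<le> (1-e) * L x + e * L y"
    and Lcont: "continuous_on S L"
    and xs: "xs \<in> S" and xmin: "\<forall>g\<in>S. L xs \<le> L g"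
    and uniq: "\<forall>h\<in>S. (\<forall>g\<in>S. L h \<le> L g) \<longrightarrow> h = xs"
    and FS: "\<And>m. F m \<in> S" and conv: "(\<lambda>m. L (F m)) \<longlonglongrightarrow> L xs"
  shows "F \<longlonglongrightarrow> xs"
proof (rule ccontr)
  assume "\<not> F \<longlonglongrightarrow> xs"
  then obtain \<delta> where d: "\<delta> > 0" and far: "\<And>N. \<exists>n\<ge>N. \<delta> \<le> dist (F n) xs"
    unfolding lim_sequentially by (meson not_le)
  define z where "z n = (1 - \<delta> / dist (F n) xs) *\<^sub>R xs + (\<delta> / dist (F n) xs) *\<^sub>R F n" for n
  define K where "K = S \<inter> sphere xs \<delta>"
  have zK: "z n \<in> K" and zL: "L (z n) \<le> L (F n)" if n: "\<delta> \<le> dist (F n) xs" for n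
  proof -
    define t where "t = \<delta> / dist (F n) xs"
    have dpos: "0 < dist (F n) xs" using n d by linarith
    have t0: "0 \<le> t" "t \<le> 1" using d n dpos by (auto simp: t_def divide_le_eq)
    have "z n \<in> S" unfolding z_def t_def[symmetric] using Sconv[OF xs FS t0] .
    moreover have "dist xs (z n) = \<delta>"
    proof -
      have "xs - z n = - (t *\<^sub>R (F n - xs))" unfolding z_def t_def[symmetric] by (simp add: algebra_simps)
      then have "dist xs (z n) = t * norm (F n - xs)" using t0 by (simp add: dist_norm)
      also have "\<dots> = \<delta>" using dpos by (simp add: t_def dist_norm)
      finally show ?thesis .
    qed
    ultimately show "z n \<in> K" by (simp add: K_def)
    have "L (z n) \<le> (1 - t) * L xs + t * L (F n)" unfolding z_def t_def[symmetric] by (rule Lconv[OF xs FS t0])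
    also have "\<dots> \<le> (1 - t) * L (F n) + t * L (F n)"
      using xmin FS[of n] t0 by (intro add_right_mono mult_left_mono) auto
    finally show "L (z n) \<le> L (F n)" by (simp add: algebra_simps)
  qed
  obtain n0 where "\<delta> \<le> dist (F n0) xs" using far by blast
  then have Kne: "K \<noteq> {}" using zK by blast
  have "compact K" unfolding K_def using S by (intro closed_Int_compact compact_sphere)
  moreover have "continuous_on K L" using Lcont by (rule continuous_on_subset) (auto simp: K_def)
  ultimately obtain g0 where g0: "g0 \<in> K" "\<forall>x\<in>K. L g0 \<le> L x"
    using continuous_attains_inf[OF _ Kne] by blast
  have gt: "L xs < L g0"
  proof (rule ccontr)
    assume "\<not> L xs < L g0"
    then have "\<forall>g\<in>S. L g0 \<le> L g" using xmin by force
    then have "g0 = xs" using uniq g0(1) by (auto simp: K_def)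
    then show False using g0(1) d by (auto simp: K_def)
  qed
  have "\<forall>\<^sub>F m in sequentially. L (F m) < L g0" using order_tendstoD(2)[OF conv gt] .
  then obtain N where N: "\<And>m. m \<ge> N \<Longrightarrow> L (F m) < L g0" by (auto simp: eventually_sequentially)
  obtain n where n: "n \<ge> N" "\<delta> \<le> dist (F n) xs" using far by blast
  have "L g0 \<le> L (z n)" using g0(2) zK[OF n(2)] by blast
  also have "\<dots> \<le> L (F n)" by (rule zL[OF n(2)])
  finally show False using N[OF n(1)] by simp
qed

lemma feasible_closed: "closed (feasible X)"
proof -
  have "feasible X = {f. \<forall>k. f \<in> (\<lambda>x. x $ k) -` Fk X k}" by (simp add: feasible_def)
  also have "closed \<dots>"
  proof (intro closed_Collect_all)
    fix k
    have "{f. f \<in> (\<lambda>x. x $ k) -` Fk X k} = (\<lambda>x. x $ k) -` Fk X k" by auto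
    then show "closed {f. f \<in> (\<lambda>x. x $ k) -` Fk X k}" using closed_vimage_vec_nth[OF Fk_closed] by simp
  qed
  finally show ?thesis .
qed

lemma feasible_convex:
  assumes "f \<in> feasible X" "g \<in> feasible X" "0 \<le> e" "e \<le> 1"
  shows "(1-e) *\<^sub>R f + e *\<^sub>R g \<in> feasible X"
  using assms unfolding feasible_def by (auto intro!: Fk_convex)

lemma sq_convex:
  fixes x y e :: real assumes "0 \<le> e" "e \<le> 1"
  shows "((1-e) * x + e * y)\<^sup>2 \<le> (1-e) * x\<^sup>2 + e * y\<^sup>2"
proof -
  have "(1-e) * x\<^sup>2 + e * y\<^sup>2 - ((1-e) * x + e * y)\<^sup>2 = e * (1-e) * (x - y)\<^sup>2"
    by (simp add: power2_eq_square algebra_simps)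
  moreover have "0 \<le> e * (1-e) * (x - y)\<^sup>2" using assms by simp
  ultimately show ?thesis by linarith
qed

lemma arith_comb:
  fixes qn qf qg lam Rn Rf Rg e :: real
  assumes "qn \<le> (1-e)*qf + e*qg" "lam*Rn \<le> lam*((1-e)*Rf + e*Rg)"
  shows "1/2*qn + lam*Rn \<le> (1-e)*(1/2*qf+lam*Rf) + e*(1/2*qg + lam*Rg)"
proof -
  have "(1-e)*(1/2*qf+lam*Rf) + e*(1/2*qg + lam*Rg) = 1/2*((1-e)*qf + e*qg) + lam*((1-e)*Rf + e*Rg)"
    by (simp add: algebra_simps field_simps)
  moreover have "1/2*qn + lam*Rn \<le> 1/2*((1-e)*qf + e*qg) + lam*((1-e)*Rf + e*Rg)"
    using assms by (intro add_mono) auto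
  ultimately show ?thesis by simp
qed

lemma loss_convex:
  assumes lam: "0 \<le> lam" and e: "0 \<le> e" "e \<le> 1"
  shows "liso_loss Y lam ((1-e) *\<^sub>R f + e *\<^sub>R g) \<le> (1-e) * liso_loss Y lam f + e * liso_loss Y lam g"
proof -
  have Sl: "Ssum ((1-e) *\<^sub>R f + e *\<^sub>R g) = (1-e) *\<^sub>R Ssum f + e *\<^sub>R Ssum g"
    by (simp add: Ssum_def sum.distrib scaleR_sum_right)
  have r: "Y - Ssum ((1-e) *\<^sub>R f + e *\<^sub>R g) = (1-e) *\<^sub>R (Y - Ssum f) + e *\<^sub>R (Y - Ssum g)"
    unfolding Sl by (simp add: algebra_simps)
  have "norm (Y - Ssum ((1-e) *\<^sub>R f + e *\<^sub>R g)) \<le> (1-e) * norm (Y - Ssum f) + e * norm (Y - Ssum g)"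
    unfolding r using norm_triangle_ineq[of "(1-e) *\<^sub>R (Y - Ssum f)" "e *\<^sub>R (Y - Ssum g)"] e by simp
  then have "(norm (Y - Ssum ((1-e) *\<^sub>R f + e *\<^sub>R g)))\<^sup>2 \<le> ((1-e) * norm (Y - Ssum f) + e * norm (Y - Ssum g))\<^sup>2"
    by (intro power_mono) auto
  also have "\<dots> \<le> (1-e) * (norm (Y - Ssum f))\<^sup>2 + e * (norm (Y - Ssum g))\<^sup>2" by (rule sq_convex[OF e])
  finally have q: "(norm (Y - Ssum ((1-e) *\<^sub>R f + e *\<^sub>R g)))\<^sup>2 \<le> (1-e) * (norm (Y - Ssum f))\<^sup>2 + e * (norm (Y - Ssum g))\<^sup>2" .
  have "(\<Sum>k\<in>UNIV. rng (((1-e) *\<^sub>R f + e *\<^sub>R g)$k)) \<le> (\<Sum>k\<in>UNIV. (1-e) * rng (f$k) + e * rng (g$k))"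
    by (rule sum_mono) (simp add: rng_convex[OF e])
  also have "\<dots> = (1-e) * (\<Sum>k\<in>UNIV. rng (f$k)) + e * (\<Sum>k\<in>UNIV. rng (g$k))"
    by (simp add: sum.distrib sum_distrib_left)
  finally have "lam * (\<Sum>k\<in>UNIV. rng (((1-e) *\<^sub>R f + e *\<^sub>R g)$k)) \<le> lam * ((1-e) * (\<Sum>k\<in>UNIV. rng (f$k)) + e * (\<Sum>k\<in>UNIV. rng (g$k)))"
    using lam by (rule mult_left_mono)
  then show ?thesis using arith_comb[OF q] unfolding loss_alt by blast
qed

lemma loss_cont: "continuous_on (S :: (real^'n^'p) set) (liso_loss Y lam)"
proof -
  have "continuous_on S (\<lambda>f::real^'n^'p. rng (f$k))" for k
    by (rule continuous_on_compose2[OF continuous_on_rng[of UNIV]]) (auto intro: continuous_intros)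
  then show ?thesis unfolding loss_alt[abs_def] Ssum_def
    by (intro continuous_intros) auto
qed



lemma AE_perms: "AE \<omega> in (perm_law :: ('p::finite) list stream measure). \<forall>m. \<omega> !! m \<in> permutations_of_set (UNIV::'p set)"
proof -
  let ?P = "permutations_of_set (UNIV::'p set)"
  have ne: "?P \<noteq> {}"
    using finite_distinct_list[of "UNIV::'p set"] by (auto simp: permutations_of_set_def)
  have "AE x in stream_space (measure_pmf (pmf_of_set ?P)). stream_all (\<lambda>x. x \<in> ?P) x"
  proof (rule prob_space.AE_stream_all[OF prob_space_measure_pmf])
    show "Measurable.pred (measure_pmf (pmf_of_set ?P)) (\<lambda>x. x \<in> ?P)" by simp
    show "AE x in measure_pmf (pmf_of_set ?P). x \<in> ?P"
      using ne by (simp add: AE_measure_pmf_iff)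
  qed
  then show ?thesis unfolding perm_law_def stream_all_def .
qed

theorem theorem3:
  fixes Y :: "real^'n" and X :: "real^'p^'n" and lam :: real
    and f0 :: "real^'n^'p"
  assumes Ysum: "(\<Sum>i\<in>UNIV. Y $ i) = 0"
    and lam: "lam \<ge> 0"
    and f0: "f0 \<in> feasible X"
  shows "(AE \<omega> in perm_law.
            antimono (\<lambda>m. liso_loss Y lam (backfit Y X lam f0 \<omega> m)) \<and>
            (\<lambda>m. liso_loss Y lam (backfit Y X lam f0 \<omega> m))
              \<longlonglongrightarrow> (INF g\<in>feasible X. liso_loss Y lam g))
      \<and> (\<forall>fstar. fstar \<in> feasible X \<and> (\<forall>g\<in>feasible X. liso_loss Y lam fstar \<le> liso_loss Y lam g)
            \<and> (\<forall>h\<in>feasible X. (\<forall>g\<in>feasible X. liso_loss Y lam h \<le> liso_loss Y lam g) \<longrightarrow> h = fstar)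
          \<longrightarrow> (AE \<omega> in perm_law. (\<lambda>m. backfit Y X lam f0 \<omega> m) \<longlonglongrightarrow> fstar))"
proof (intro conjI allI impI)
  show "AE \<omega> in perm_law.
            antimono (\<lambda>m. liso_loss Y lam (backfit Y X lam f0 \<omega> m)) \<and>
            (\<lambda>m. liso_loss Y lam (backfit Y X lam f0 \<omega> m))
              \<longlonglongrightarrow> (INF g\<in>feasible X. liso_loss Y lam g)"
    using AE_perms by (rule eventually_mono) (rule traj_part1[OF lam f0])
next
  fix fstar
  assume fs: "fstar \<in> feasible X \<and> (\<forall>g\<in>feasible X. liso_loss Y lam fstar \<le> liso_loss Y lam g)
            \<and> (\<forall>h\<in>feasible X. (\<forall>g\<in>feasible X. liso_loss Y lam h \<le> liso_loss Y lam g) \<longrightarrow> h = fstar)"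
  have bdd: "bdd_below (liso_loss Y lam ` feasible X)"
    using loss_nonneg[OF lam] by (intro bdd_belowI) auto
  have inf: "(INF g\<in>feasible X. liso_loss Y lam g) = liso_loss Y lam fstar"
  proof (rule antisym)
    show "(INF g\<in>feasible X. liso_loss Y lam g) \<le> liso_loss Y lam fstar"
      using fs bdd by (intro cINF_lower) auto
    show "liso_loss Y lam fstar \<le> (INF g\<in>feasible X. liso_loss Y lam g)"
      using fs by (intro cINF_greatest) auto
  qed
  show "AE \<omega> in perm_law. (\<lambda>m. backfit Y X lam f0 \<omega> m) \<longlonglongrightarrow> fstar"
    using AE_perms
  proof (rule eventually_mono)
    fix \<omega> :: "'p list stream"
    assume perm: "\<forall>m. \<omega> !! m \<in> permutations_of_set UNIV"
    have conv: "(\<lambda>m. liso_loss Y lam (backfit Y X lam f0 \<omega> m)) \<longlonglongrightarrow> liso_loss Y lam fstar"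
      using traj_part1[OF lam f0 perm, of Y] inf by simp
    have FS: "backfit Y X lam f0 \<omega> m \<in> feasible X" for m
    proof (induction m)
      case 0 then show ?case using f0 by simp
    next
      case (Suc m) then show ?case by (simp add: cycle_def foldl_feasible[OF lam])
    qed
    show "(\<lambda>m. backfit Y X lam f0 \<omega> m) \<longlonglongrightarrow> fstar"
      by (rule unique_min_conv[OF feasible_closed feasible_convex loss_convex[OF lam] loss_cont _ _ _ FS conv])
         (use fs in auto)
  qed
qed

end
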